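(* In the Mean-Var-BTS-RED setting, let $p=\frac1{4e\sqrt\pi}$ and let $S'_t=\{\boldsymbol x\in\mathcal X:\Delta(\boldsymbol x)>\omega c_t\sigma_{t-1}(\boldsymbol x)+(1-\omega)c'_t\sigma'_{t-1}(\boldsymbol x)\}$ with $\Delta(\boldsymbol x)=h(\boldsymbol x^*_\omega)-h(\boldsymbol x)$. For every $t\ge1$ and all histories $\mathcal F_{t-1},\mathcal F'_{t-1}$ on which both $E^f(t)$ and $E^g(t)$ hold, $$\mathbb P\big(\boldsymbol x^{(b)}_t\in\mathcal X\setminus S'_t\mid\mathcal F_{t-1},\mathcal F'_{t-1}\big)\ge p^2-1/t^2\qquad\text{for all }b\in[b_t].$$
   Context: Setting (Mean-Var-BTS-RED). $\mathcal X$ finite; $k,k'$ squared-exponential kernels on $\mathcal X$ (so $k(\boldsymbol x,\boldsymbol x)=k'(\boldsymbol x,\boldsymbol x)=1$). Unknown $f\in\mathcal H_k$ with $\|f\|_{\mathcal H_k}\le B$, unknown noise variance $\sigma^2:\mathcal X\to(0,\infty)$ with maximum $\sigma^2_{\max}$, and $g=-\sigma^2$ with $\|g\|_{\mathcal H_{k'}}\le B'$. Querying $\boldsymbol x$ returns $f(\boldsymbol x)+\epsilon$, $\epsilon\sim\mathcal N(0,\sigma^2(\boldsymbol x))$ independently. Horizon $T$, budget $\mathbb B\in\mathbb N$, $R^2>0$, weight $\omega\in[0,1]$, $\lambda=1+2/T$, $\delta\in(0,1)$, minimum replication $n_{\min}\ge2$. GP posterior formulas: from pairs $(\boldsymbol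 x_i,y_i)$, $\mu(\boldsymbol x)=\boldsymbol k(\boldsymbol x)^\top(\boldsymbol K+\lambda I)^{-1}\boldsymbol y$, $s^2(\boldsymbol x,\boldsymbol x')=k(\boldsymbol x,\boldsymbol x')-\boldsymbol k(\boldsymbol x)^\top(\boldsymbol K+\lambda I)^{-1}\boldsymbol k(\boldsymbol x')$. $\mu_{t-1},\sigma^2_{t-1}(\cdot,\cdot)$ (kernel $k$) use pairs $(\boldsymbol x^{(b)}_{t'},y^{(b)}_{t'})$ and $\mu'_{t-1},\sigma'^2_{t-1}(\cdot,\cdot)$ (kernel $k'$) use pairs $(\boldsymbol x^{(b)}_{t'},\widetilde y^{(b)}_{t'})$, $t'<t$; $\sigma_{t-1}(\boldsymbol x)$, $\sigma'_{t-1}(\boldsymbol x)$ are the posterior standard deviations. Algorithm: in iteration $t$, for $b=1,2,\dots$: independently sample $f^{(b)}_t\sim\mathcal{GP}(\mu_{t-1},\beta_t^2\sigma^2_{t-1})$ and $g^{(b)}_t\sim\mathcal{GP}(\mu'_{t-1},\beta_t'^2\sigma'^2_{t-1})$; set $\boldsymbol x^{(b)}_t\in\arg\max_{\boldsymbol x}[\omega f^{(b)}_t(\boldsymbol x)+(1-\omega)g^{(b)}_t(\boldsymbol x)]$ and $n^{(b)}_t=\max\{n_{\min},\lceil(-\mu'_{t-1}(\boldsymbol x^{(b)}_t)+\beta'_t\sigma'_{t-1}(\boldsymbol x^{(b)}_t))/R^2\rceil\}$; stop at the first $b$ with $\sum_{b'\le b}n^{(b')}_t\ge\mathbb B$ and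 set $b_t=b-1$. Each $\boldsymbol x^{(b)}_t$, $b\in[b_t]$, is queried $n^{(b)}_t$ times; $y^{(b)}_t$ is the empirical mean and $\widetilde y^{(b)}_t=-\frac1{n^{(b)}_t-1}\sum_n(y^{(b)}_{t,n}-y^{(b)}_t)^2$ the negated unbiased empirical variance. $\tau_{t-1}=\sum_{t'<t}b_{t'}$. $\Gamma_m$ ($\Gamma'_m$) is the maximum over $|A|\le m$ of $\frac12\log\det(I+\lambda^{-1}K_A)$ for $k$ ($k'$). $\beta_t=B+R\sqrt{2(\Gamma_{\tau_{t-1}}+1+\log(3/\delta))}$, $\beta'_t=B'+R'\sqrt{2(\Gamma'_{\tau_{t-1}}+1+\log(3/\delta))}$ for a constant $R'>0$, $c_t=\beta_t(1+\sqrt{2\log(2\mathbb B|\mathcal X|t^2)})$, $c'_t=\beta'_t(1+\sqrt{2\log(2\mathbb B|\mathcal X|t^2)})$. $h(\boldsymbol x)=\omega f(\boldsymbol x)+(1-\omega)g(\boldsymbol x)$, $\boldsymbol x^*_\omega\in\arg\max h$. $\mathcal F_{t-1}$ ($\mathcal F'_{t-1}$) is the history of observed (input, empirical mean) (resp. (input, empirical noise variance)) pairs up to iteration $t-1$. $E^f(t)$: $|\mu_{t-1}(\boldsymbol x)-f(\boldsymbol x)|\le\beta_t\sigma_{t-1}(\boldsymbol x)$ for all $\boldsymbol x$; $E^g(t)$: $|\mu'_{t-1}(\boldsymbol x)-g(\boldsymbol x)|\le\beta'_t\sigma'_{t-1}(\boldsymbol x)$ for all $\boldsymbol x$. *)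

theory Defs
  imports "HOL-Probability.Probability"
begin

definition se_kernel :: "real \<Rightarrow> 'a::real_normed_vector \<Rightarrow> 'a \<Rightarrow> real" where
  "se_kernel l x y = exp (- (norm (x - y))\<^sup>2 / (2 * l\<^sup>2))"

text \<open>RKHS of a kernel on a finite domain S: the span of the sections k(.,x), x in S,
  with the norm of sum_x alpha_x k(.,x) being sqrt(sum alpha_x alpha_y k(x,y)).\<close>
definition rkhs_reps :: "('a \<Rightarrow> 'a \<Rightarrow> real) \<Rightarrow> 'a set \<Rightarrow> ('a \<Rightarrow> real) \<Rightarrow> ('a \<Rightarrow> real) set" where
  "rkhs_reps k S f = {\<alpha>. \<forall>y\<in>S. f y = (\<Sum>x\<in>S. \<alpha> x * k y x)}"

definition in_rkhs :: "('a \<Rightarrow> 'a \<Rightarrow> real) \<Rightarrow> 'a set \<Rightarrow> ('a \<Rightarrow> real) \<Rightarrow> bool" where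
  "in_rkhs k S f \<longleftrightarrow> rkhs_reps k S f \<noteq> {}"

definition rkhs_norm :: "('a \<Rightarrow> 'a \<Rightarrow> real) \<Rightarrow> 'a set \<Rightarrow> ('a \<Rightarrow> real) \<Rightarrow> real" where
  "rkhs_norm k S f = Inf ((\<lambda>\<alpha>. sqrt (\<Sum>x\<in>S. \<Sum>y\<in>S. \<alpha> x * \<alpha> y * k x y)) ` rkhs_reps k S f)"

definition det_fn :: "nat \<Rightarrow> (nat \<Rightarrow> nat \<Rightarrow> real) \<Rightarrow> real" where
  "det_fn n A = (\<Sum>p | p permutes {..<n}. of_int (sign p) * (\<Prod>i<n. A i (p i)))"

text \<open>The solution v = A^{-1} b (A invertible), as the unique vector supported on indices below n.\<close>
definition solve_fn :: "nat \<Rightarrow> (nat \<Rightarrow> nat \<Rightarrow> real) \<Rightarrow> (nat \<Rightarrow> real) \<Rightarrow> (nat \<Rightarrow> real)" where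
  "solve_fn n A b = (THE v. (\<forall>i<n. (\<Sum>j<n. A i j * v j) = b i) \<and> (\<forall>i\<ge>n. v i = 0))"

definition gram_reg :: "('a \<Rightarrow> 'a \<Rightarrow> real) \<Rightarrow> real \<Rightarrow> 'a list \<Rightarrow> nat \<Rightarrow> nat \<Rightarrow> real" where
  "gram_reg k lam xs i j = k (xs ! i) (xs ! j) + (if i = j then lam else 0)"

text \<open>GP posterior mean  k(x)^T (K + lam I)^{-1} y  from data pairs (x_i, y_i).\<close>
definition post_mean :: "('a \<Rightarrow> 'a \<Rightarrow> real) \<Rightarrow> real \<Rightarrow> ('a \<times> real) list \<Rightarrow> 'a \<Rightarrow> real" where
  "post_mean k lam D x =
     (let xs = map fst D; n = length D;
          \<alpha> = solve_fn n (gram_reg k lam xs) (\<lambda>i. snd (D ! i))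
      in \<Sum>i<n. k x (xs ! i) * \<alpha> i)"

text \<open>GP posterior covariance  k(x,x') - k(x)^T (K + lam I)^{-1} k(x')  (depends only on the inputs).\<close>
definition post_cov :: "('a \<Rightarrow> 'a \<Rightarrow> real) \<Rightarrow> real \<Rightarrow> 'a list \<Rightarrow> 'a \<Rightarrow> 'a \<Rightarrow> real" where
  "post_cov k lam xs x x' =
     (let n = length xs;
          \<gamma> = solve_fn n (gram_reg k lam xs) (\<lambda>i. k (xs ! i) x')
      in k x x' - (\<Sum>i<n. k x (xs ! i) * \<gamma> i))"

definition post_sd :: "('a \<Rightarrow> 'a \<Rightarrow> real) \<Rightarrow> real \<Rightarrow> 'a list \<Rightarrow> 'a \<Rightarrow> real" where
  "post_sd k lam xs x = sqrt (post_cov k lam xs x x)"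

text \<open>Maximum information gain Gamma_m: maximum over (multi)sets A of at most m points of S
  (represented as lists) of (1/2) log det(I + lam^{-1} K_A).\<close>
definition max_info_gain :: "('a \<Rightarrow> 'a \<Rightarrow> real) \<Rightarrow> real \<Rightarrow> 'a set \<Rightarrow> nat \<Rightarrow> real" where
  "max_info_gain k lam S m =
     Max ((\<lambda>xs. (1/2) * ln (det_fn (length xs)
              (\<lambda>i j. (if i = j then 1 else 0) + k (xs ! i) (xs ! j) / lam)))
          ` {xs. set xs \<subseteq> S \<and> length xs \<le> m})"

text \<open>Gaussian random vector indexed by a finite set S (a GP restricted to S), with mean m and
  covariance C: every linear combination is univariate normal with the corresponding mean and
  variance (degenerate, i.e. a.s. constant, when the variance is 0).\<close>
definition gaussian_field ::
  "'b measure \<Rightarrow> 'a set \<Rightarrow> ('a \<Rightarrow> real) \<Rightarrow> ('a \<Rightarrow> 'a \<Rightarrow> real) \<Rightarrow> ('b \<Rightarrow> 'a \<Rightarrow> real) \<Rightarrow> bool" where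
  "gaussian_field M S m C F \<longleftrightarrow>
     prob_space M \<and> (\<forall>x\<in>S. (\<lambda>\<omega>. F \<omega> x) \<in> borel_measurable M) \<and>
     (\<forall>a. let Y = (\<lambda>\<omega>. \<Sum>x\<in>S. a x * F \<omega> x);
              mu = (\<Sum>x\<in>S. a x * m x);
              v = (\<Sum>x\<in>S. \<Sum>y\<in>S. a x * a y * C x y)
          in if v > 0 then distributed M lborel Y (normal_density mu (sqrt v))
             else (AE \<omega> in M. Y \<omega> = mu))"

end

theory Submission
  imports Defs
begin

lemma inner_pow_psd:
  fixes S :: "'a::euclidean_space set"
  assumes "finite S"
  shows "0 \<le> (\<Sum>x\<in>S. \<Sum>y\<in>S. c x * c y * (inner x y)^n)"
proof (induction n arbitrary: c)
  case 0
  have "(\<Sum>x\<in>S. \<Sum>y\<in>S. c x * c y * (inner x y)^0) = (\<Sum>x\<in>S. c x) * (\<Sum>y\<in>S. c y)"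
    by (simp add: sum_product)
  then show ?case by simp
next
  case (Suc n)
  have e: "c x * c y * (inner x y)^Suc n = (\<Sum>i\<in>Basis. (c x * inner x i) * (c y * inner y i) * (inner x y)^n)" for x y
  proof -
    have "c x * c y * (inner x y)^Suc n = inner x y * (c x * c y * (inner x y)^n)"
      by (simp add: mult_ac)
    also have "\<dots> = (\<Sum>i\<in>Basis. inner x i * inner y i) * (c x * c y * (inner x y)^n)"
      by (rule arg_cong[where f="\<lambda>z. z * (c x * c y * (inner x y)^n)"], rule euclidean_inner)
    also have "\<dots> = (\<Sum>i\<in>Basis. (c x * inner x i) * (c y * inner y i) * (inner x y)^n)"
      unfolding sum_distrib_right by (intro sum.cong refl) (simp only: mult_ac)
    finally show ?thesis .
  qed
  have "(\<Sum>x\<in>S. \<Sum>y\<in>S. c x * c y * (inner x y)^Suc n)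
     = (\<Sum>x\<in>S. \<Sum>y\<in>S. \<Sum>i\<in>Basis. (c x * inner x i) * (c y * inner y i) * (inner x y)^n)"
    by (simp only: e)
  also have "\<dots> = (\<Sum>x\<in>S. \<Sum>i\<in>Basis. \<Sum>y\<in>S. (c x * inner x i) * (c y * inner y i) * (inner x y)^n)"
    by (rule sum.cong[OF refl], rule sum.swap)
  also have "\<dots> = (\<Sum>i\<in>Basis. \<Sum>x\<in>S. \<Sum>y\<in>S. (c x * inner x i) * (c y * inner y i) * (inner x y)^n)"
    by (rule sum.swap)
  also have "\<dots> \<ge> 0"
    by (intro sum_nonneg Suc.IH)
  finally show ?case .
qed

lemma exp_sums_real: "(\<lambda>n. (z::real)^n / fact n) sums exp z"
  using exp_converges[of z] by (simp add: field_simps)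

lemma exp_inner_psd:
  fixes S :: "'a::euclidean_space set"
  assumes "finite S" "a \<ge> 0"
  shows "0 \<le> (\<Sum>x\<in>S. \<Sum>y\<in>S. c x * c y * exp (a * inner x y))"
proof -
  have s: "(\<lambda>n. \<Sum>x\<in>S. \<Sum>y\<in>S. c x * c y * ((a * inner x y)^n / fact n))
      sums (\<Sum>x\<in>S. \<Sum>y\<in>S. c x * c y * exp (a * inner x y))"
    by (intro sums_sum sums_mult exp_sums_real)
  have z: "(\<lambda>n. 0) sums (0::real)" by simp
  have nn: "0 \<le> (\<Sum>x\<in>S. \<Sum>y\<in>S. c x * c y * ((a * inner x y)^n / fact n))" for n
  proof -
    have "(\<Sum>x\<in>S. \<Sum>y\<in>S. c x * c y * ((a * inner x y)^n / fact n))
      = (a^n / fact n) * (\<Sum>x\<in>S. \<Sum>y\<in>S. c x * c y * (inner x y)^n)"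
      unfolding sum_distrib_left by (intro sum.cong refl) (simp add: power_mult_distrib)
    also have "\<dots> \<ge> 0" using inner_pow_psd[OF assms(1)] assms(2) by simp
    finally show ?thesis .
  qed
  show ?thesis by (rule sums_le[OF nn z s])
qed

lemma se_psd:
  fixes S :: "'a::euclidean_space set"
  assumes "finite S" "l > 0"
  shows "0 \<le> (\<Sum>x\<in>S. \<Sum>y\<in>S. c x * c y * se_kernel l x y)"
proof -
  define e where "e x = exp (- (norm x)\<^sup>2 / (2 * l\<^sup>2))" for x :: 'a
  have k: "se_kernel l x y = e x * e y * exp ((1 / l\<^sup>2) * inner x y)" for x y
  proof -
    have "(norm (x - y))\<^sup>2 = (norm x)\<^sup>2 + (norm y)\<^sup>2 - 2 * inner x y"
      by (simp add: power2_norm_eq_inner inner_diff_left inner_diff_right inner_commute)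
    then have "- (norm (x - y))\<^sup>2 / (2 * l\<^sup>2) = - (norm x)\<^sup>2 / (2 * l\<^sup>2) + - (norm y)\<^sup>2 / (2 * l\<^sup>2) + (1 / l\<^sup>2) * inner x y"
      using assms(2) by (simp add: field_simps)
    then show ?thesis
      by (simp only: se_kernel_def e_def exp_add)
  qed
  have "(\<Sum>x\<in>S. \<Sum>y\<in>S. c x * c y * se_kernel l x y)
      = (\<Sum>x\<in>S. \<Sum>y\<in>S. (c x * e x) * (c y * e y) * exp ((1 / l\<^sup>2) * inner x y))"
    by (intro sum.cong refl) (simp only: k mult_ac)
  also have "\<dots> \<ge> 0" using exp_inner_psd[OF assms(1), of "1 / l\<^sup>2" "\<lambda>x. c x * e x"] by simp
  finally show ?thesis .
qed

lemma rkhs_norm_nonneg: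
  fixes S :: "'a::euclidean_space set"
  assumes "finite S" "l > 0" "in_rkhs (se_kernel l) S f"
  shows "0 \<le> rkhs_norm (se_kernel l) S f"
  unfolding rkhs_norm_def
proof (rule cInf_greatest)
  show "(\<lambda>\<alpha>. sqrt (\<Sum>x\<in>S. \<Sum>y\<in>S. \<alpha> x * \<alpha> y * se_kernel l x y)) ` rkhs_reps (se_kernel l) S f \<noteq> {}"
    using assms(3) unfolding in_rkhs_def by blast
next
  fix z assume "z \<in> (\<lambda>\<alpha>. sqrt (\<Sum>x\<in>S. \<Sum>y\<in>S. \<alpha> x * \<alpha> y * se_kernel l x y)) ` rkhs_reps (se_kernel l) S f"
  then obtain \<alpha> where "z = sqrt (\<Sum>x\<in>S. \<Sum>y\<in>S. \<alpha> x * \<alpha> y * se_kernel l x y)" by blast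
  then show "0 \<le> z" using se_psd[OF assms(1,2), of \<alpha>] by simp
qed


lemma det_fn_0: "det_fn 0 A = 1"
  unfolding det_fn_def by simp

lemma max_info_gain_nonneg:
  assumes "finite S"
  shows "0 \<le> max_info_gain k lam S m"
proof -
  let ?g = "\<lambda>xs. (1/2) * ln (det_fn (length xs)
              (\<lambda>i j. (if i = j then 1 else 0) + k (xs ! i) (xs ! j) / lam))"
  have fin: "finite {xs. set xs \<subseteq> S \<and> length xs \<le> m}"
    by (rule finite_lists_length_le[OF assms])
  have mem: "[] \<in> {xs. set xs \<subseteq> S \<and> length xs \<le> m}" by simp
  have "?g [] \<le> Max (?g ` {xs. set xs \<subseteq> S \<and> length xs \<le> m})"
    by (rule Max_ge[OF finite_imageI[OF fin] imageI[OF mem]])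
  moreover have "?g [] = 0" by (simp add: det_fn_0)
  ultimately show ?thesis unfolding max_info_gain_def by simp
qed

lemma p_bound: "1 / (4 * exp 1 * sqrt pi) \<le> std_normal_density (3/2) / 2"
proof -
  have e4: "exp (1/4::real) \<le> 2" using exp_bound_half[of "1/4::real"] by simp
  have "exp (1/8::real) ^ 2 = exp (1/4)" by (simp add: exp_double[symmetric] power2_eq_square flip: exp_add)
  then have "exp (1/8::real) ^ 2 \<le> sqrt 2 ^ 2" using e4 by simp
  then have e8: "exp (1/8::real) \<le> sqrt 2" by (rule power2_le_imp_le) simp
  have "exp (-9/8::real) = exp (-1) / exp (1/8)" by (simp flip: exp_diff)
  have "std_normal_density (3/2) / 2 = exp (- 9 / 8) / (2 * sqrt 2 * sqrt pi)"
    by (simp add: std_normal_density_def real_sqrt_mult power2_eq_square)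
  also have "exp (- 9 / 8) = exp (-1) / exp (1/8::real)" by (simp flip: exp_diff)
  finally have eq: "std_normal_density (3/2) / 2 = exp (-1) / (2 * sqrt 2 * exp (1/8) * sqrt pi)"
    by simp
  have "2 * sqrt 2 * exp (1/8) * sqrt pi \<le> 2 * sqrt 2 * sqrt 2 * sqrt pi"
    using e8 by (intro mult_right_mono mult_left_mono) auto
  also have "\<dots> = 4 * sqrt pi" by simp
  finally have d: "2 * sqrt 2 * exp (1/8) * sqrt pi \<le> 4 * sqrt pi" .
  have "1 / (4 * exp 1 * sqrt pi) = exp (-1) / (4 * sqrt pi)" by (simp add: exp_minus field_simps)
  also have "\<dots> \<le> exp (-1) / (2 * sqrt 2 * exp (1/8) * sqrt pi)"
    using d by (intro divide_left_mono) auto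
  finally show ?thesis using eq by simp
qed

lemma std_normal_lower:
  assumes "prob_space M" "distributed M lborel Z std_normal_density"
  shows "1/(4 * exp 1 * sqrt pi) \<le> measure M {\<omega>\<in>space M. 1 \<le> Z \<omega>}"
proof -
  interpret prob_space M by fact
  have "(\<integral>\<^sup>+x. ennreal (std_normal_density (3/2)) * indicator {1..3/2::real} x \<partial>lborel)
     = ennreal (std_normal_density (3/2)) * emeasure lborel {1..3/2::real}"
    by (rule nn_integral_cmult_indicator) simp
  also have "emeasure lborel {1..3/2::real} = ennreal (1/2)"
    using emeasure_lborel_Icc[of 1 "3/2::real"] by (simp del: emeasure_lborel_Icc)
  also have "ennreal (std_normal_density (3/2)) * ennreal (1/2) = ennreal (std_normal_density (3/2) / 2)"
    by (subst ennreal_mult[symmetric]) auto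
  finally have "ennreal (std_normal_density (3/2) / 2) = (\<integral>\<^sup>+x. ennreal (std_normal_density (3/2)) * indicator {1..3/2::real} x \<partial>lborel)" ..
  also have "\<dots> \<le> (\<integral>\<^sup>+x. ennreal (std_normal_density x) * indicator {1..} x \<partial>lborel)"
  proof (intro nn_integral_mono)
    fix x :: real
    show "ennreal (std_normal_density (3/2)) * indicator {1..3/2::real} x \<le> ennreal (std_normal_density x) * indicator {1..} x"
    proof (cases "x \<in> {1..3/2::real}")
      case True
      then have "x\<^sup>2 \<le> (3/2)\<^sup>2" by (intro power_mono) auto
      then have "exp (- (3/2::real)\<^sup>2 / 2) \<le> exp (- x\<^sup>2 / 2)" by simp
      then have "std_normal_density (3/2) \<le> std_normal_density x"
        unfolding std_normal_density_def by (intro mult_left_mono) auto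
      then show ?thesis using True by (simp add: ennreal_leI)
    qed simp
  qed
  also have "\<dots> = emeasure M (Z -` {1..} \<inter> space M)"
    by (rule distributed_emeasure[OF assms(2), symmetric]) simp
  also have "Z -` {1..} \<inter> space M = {\<omega>\<in>space M. 1 \<le> Z \<omega>}" by auto
  finally have "ennreal (std_normal_density (3/2) / 2) \<le> ennreal (measure M {\<omega>\<in>space M. 1 \<le> Z \<omega>})"
    by (simp add: emeasure_eq_measure)
  then have "std_normal_density (3/2) / 2 \<le> measure M {\<omega>\<in>space M. 1 \<le> Z \<omega>}"
    by (simp add: ennreal_le_iff)
  then show ?thesis using p_bound by linarith
qed

lemma exp_tail:
  assumes "L > (0::real)"
  shows "emeasure (density lborel (exponential_density L)) {L<..} = ennreal (exp (- L\<^sup>2))"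
proof -
  let ?N = "density lborel (exponential_density L)"
  interpret N: prob_space ?N using prob_space_exponential_density[OF assms] .
  have "emeasure ?N {..L} = ennreal (1 - exp (- L * L))"
    using emeasure_erlang_density[OF assms, of 0 L] assms by (simp add: erlang_CDF_def)
  then have m: "measure ?N {..L} = 1 - exp (- L * L)"
    by (simp add: N.emeasure_eq_measure)
  have "measure ?N {L<..} = measure ?N (space ?N - {..L})"
    by (intro arg_cong[where f="measure ?N"]) auto
  also have "\<dots> = 1 - measure ?N {..L}" by (rule N.prob_compl) simp
  finally have "measure ?N {L<..} = exp (- L\<^sup>2)" using m by (simp add: power2_eq_square)
  then show ?thesis by (simp add: N.emeasure_eq_measure)
qed

lemma std_normal_upper:
  assumes "prob_space M" "distributed M lborel Z std_normal_density" "L > 0" "2 \<le> L * sqrt (2 * pi)"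
  shows "measure M {\<omega>\<in>space M. L < Z \<omega>} \<le> exp (- L\<^sup>2 / 2) / 2"
proof -
  interpret prob_space M by fact
  define C where "C = exp (L\<^sup>2 / 2) / (L * sqrt (2 * pi))"
  have C: "C \<ge> 0" using assms(3) by (simp add: C_def)
  have "emeasure M {\<omega>\<in>space M. L < Z \<omega>} = emeasure M (Z -` {L<..} \<inter> space M)"
    by (intro arg_cong[where f="emeasure M"]) auto
  also have "\<dots> = (\<integral>\<^sup>+x. ennreal (std_normal_density x) * indicator {L<..} x \<partial>lborel)"
    by (rule distributed_emeasure[OF assms(2)]) simp
  also have "\<dots> \<le> (\<integral>\<^sup>+x. ennreal C * (ennreal (exponential_density L x) * indicator {L<..} x) \<partial>lborel)"
  proof (intro nn_integral_mono)
    fix x :: real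
    show "ennreal (std_normal_density x) * indicator {L<..} x \<le> ennreal C * (ennreal (exponential_density L x) * indicator {L<..} x)"
    proof (cases "L < x")
      case True
      have "- x\<^sup>2 / 2 \<le> L\<^sup>2 / 2 + - x * L"
        using sum_power2_ge_zero[of "x - L" 0] by (simp add: power2_eq_square algebra_simps)
      then have "exp (- x\<^sup>2 / 2) \<le> exp (L\<^sup>2 / 2) * exp (- x * L)" by (simp flip: exp_add)
      then have "std_normal_density x \<le> C * exponential_density L x"
        using True assms(3) by (simp add: std_normal_density_def C_def exponential_density_def field_simps)
      then show ?thesis using True C assms(3)
        by (simp add: ennreal_mult[symmetric] ennreal_leI del: ennreal_mult)
    qed simp
  qed
  also have "\<dots> = ennreal C * (\<integral>\<^sup>+x. ennreal (exponential_density L x) * indicator {L<..} x \<partial>lborel)"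
    by (rule nn_integral_cmult) simp
  also have "(\<integral>\<^sup>+x. ennreal (exponential_density L x) * indicator {L<..} x \<partial>lborel) = ennreal (exp (- L\<^sup>2))"
    using exp_tail[OF assms(3)] by (simp add: emeasure_density)
  finally have "ennreal (measure M {\<omega>\<in>space M. L < Z \<omega>}) \<le> ennreal (C * exp (- L\<^sup>2))"
    using C by (simp add: emeasure_eq_measure ennreal_mult)
  then have le: "measure M {\<omega>\<in>space M. L < Z \<omega>} \<le> C * exp (- L\<^sup>2)"
    using C by (simp add: ennreal_le_iff)
  have "C * exp (- L\<^sup>2) = exp (- L\<^sup>2 / 2) / (L * sqrt (2 * pi))"
    by (simp add: C_def field_simps flip: exp_add)
  also have "\<dots> \<le> exp (- L\<^sup>2 / 2) / 2"
    using assms(3,4) by (intro divide_left_mono) auto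
  finally show ?thesis using le by linarith
qed


lemma sum_ind:
  assumes "finite S" "x \<in> S"
  shows "(\<Sum>y\<in>S. (if y = x then 1 else 0) * g y) = (g x :: real)"
proof -
  have "(\<Sum>y\<in>S. (if y = x then 1 else 0) * g y) = (\<Sum>y\<in>S. if y = x then g y else 0)"
    by (rule sum.cong) auto
  also have "\<dots> = g x" using assms by (simp add: sum.delta)
  finally show ?thesis .
qed

lemma gf_coord:
  assumes gf: "gaussian_field M S m C F" and x: "x \<in> S" and fin: "finite S"
  shows "(\<lambda>\<omega>. F \<omega> x) \<in> borel_measurable M"
    "if C x x > 0 then distributed M lborel (\<lambda>\<omega>. F \<omega> x) (normal_density (m x) (sqrt (C x x)))
     else (AE \<omega> in M. F \<omega> x = m x)"
proof -
  show "(\<lambda>\<omega>. F \<omega> x) \<in> borel_measurable M" using gf x unfolding gaussian_field_def by blast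
  define a where "a y = (if y = x then 1 else (0::real))" for y
  have Y: "(\<lambda>\<omega>. \<Sum>y\<in>S. a y * F \<omega> y) = (\<lambda>\<omega>. F \<omega> x)"
    using fin x by (simp add: a_def sum_ind)
  have mu: "(\<Sum>y\<in>S. a y * m y) = m x"
    using fin x by (simp add: a_def sum_ind)
  have v: "(\<Sum>y\<in>S. \<Sum>z\<in>S. a y * a z * C y z) = C x x"
  proof -
    have "(\<Sum>y\<in>S. \<Sum>z\<in>S. a y * a z * C y z) = (\<Sum>y\<in>S. a y * (\<Sum>z\<in>S. a z * C y z))"
      by (simp add: sum_distrib_left mult.assoc)
    also have "\<dots> = (\<Sum>z\<in>S. a z * C x z)" using fin x by (simp only: a_def sum_ind)
    also have "\<dots> = C x x" using fin x by (simp only: a_def sum_ind)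
    finally show ?thesis .
  qed
  from gf have "let Y = (\<lambda>\<omega>. \<Sum>y\<in>S. a y * F \<omega> y);
              mu = (\<Sum>y\<in>S. a y * m y);
              v = (\<Sum>y\<in>S. \<Sum>z\<in>S. a y * a z * C y z)
          in if v > 0 then distributed M lborel Y (normal_density mu (sqrt v))
             else (AE \<omega> in M. Y \<omega> = mu)"
    unfolding gaussian_field_def by blast
  then show "if C x x > 0 then distributed M lborel (\<lambda>\<omega>. F \<omega> x) (normal_density (m x) (sqrt (C x x)))
     else (AE \<omega> in M. F \<omega> x = m x)"
    unfolding Let_def Y mu v .
qed

lemma p_le_1: "1 / (4 * exp 1 * sqrt pi) \<le> (1::real)"
proof -
  have "1 \<le> exp (1::real)" by simp
  moreover have "1 \<le> sqrt pi" using pi_gt3 by simp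
  ultimately have "1 * 1 \<le> exp 1 * sqrt pi" by (intro mult_mono) auto
  then have "1 \<le> 4 * exp 1 * sqrt pi" by simp
  then show ?thesis by simp
qed

lemma coord_bounds:
  assumes P: "prob_space M" and Ym[measurable]: "Y \<in> borel_measurable M"
   and G: "if v > 0 then distributed M lborel Y (normal_density m (sqrt v)) else (AE \<omega> in M. Y \<omega> = m)"
   and v: "v = \<beta>\<^sup>2 * c" and \<beta>: "\<beta> \<ge> 0" and c: "c \<ge> 0"
  shows "a \<le> m + \<beta> * sqrt c \<Longrightarrow> 1 / (4 * exp 1 * sqrt pi) \<le> measure M {\<omega>\<in>space M. a \<le> Y \<omega>}"
    and "L > 0 \<Longrightarrow> 2 \<le> L * sqrt (2 * pi) \<Longrightarrow>
         measure M {\<omega>\<in>space M. L * (\<beta> * sqrt c) < \<bar>Y \<omega> - m\<bar>} \<le> exp (- L\<^sup>2 / 2)"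
proof -
  interpret prob_space M by fact
  define s where "s = \<beta> * sqrt c"
  have sv: "sqrt v = s" using \<beta> c by (simp add: v s_def real_sqrt_mult)
  have s0: "s \<ge> 0" using \<beta> c by (simp add: s_def)
  {
    assume a: "a \<le> m + \<beta> * sqrt c"
    show "1 / (4 * exp 1 * sqrt pi) \<le> measure M {\<omega>\<in>space M. a \<le> Y \<omega>}"
    proof (cases "v > 0")
      case True
      then have sp: "s > 0" using sv by (metis real_sqrt_gt_0_iff)
      have D: "distributed M lborel Y (normal_density m s)" using G True sv by simp
      then have Z: "distributed M lborel (\<lambda>\<omega>. (Y \<omega> - m) / s) std_normal_density"
        using normal_standard_normal_convert[OF sp] by simp
      have "1 / (4 * exp 1 * sqrt pi) \<le> measure M {\<omega>\<in>space M. 1 \<le> (Y \<omega> - m) / s}"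
        by (rule std_normal_lower[OF P Z])
      also have "\<dots> \<le> measure M {\<omega>\<in>space M. a \<le> Y \<omega>}"
      proof (rule finite_measure_mono)
        show "{\<omega>\<in>space M. 1 \<le> (Y \<omega> - m) / s} \<subseteq> {\<omega>\<in>space M. a \<le> Y \<omega>}"
          using a sp by (auto simp: s_def field_simps)
      qed measurable
      finally show ?thesis .
    next
      case False
      then have "v = 0" using v \<beta> c by (metis mult_nonneg_nonneg order_less_le zero_le_power2)
      then have "s = 0" using sv by simp
      then have am: "a \<le> m" using a by (auto simp: s_def)
      have "AE \<omega> in M. Y \<omega> = m" using G False by simp
      then have "AE \<omega> in M. a \<le> Y \<omega>" by eventually_elim (use am in simp)
      then have "measure M {\<omega>\<in>space M. a \<le> Y \<omega>} = 1"
        by (subst prob_Collect_eq_1) measurable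
      then show ?thesis using p_le_1 by simp
    qed
  }
  {
    assume L: "L > 0" "2 \<le> L * sqrt (2 * pi)"
    show "measure M {\<omega>\<in>space M. L * (\<beta> * sqrt c) < \<bar>Y \<omega> - m\<bar>} \<le> exp (- L\<^sup>2 / 2)"
    proof (cases "v > 0")
      case True
      then have sp: "s > 0" using sv by (metis real_sqrt_gt_0_iff)
      have D: "distributed M lborel Y (normal_density m s)" using G True sv by simp
      then have Z: "distributed M lborel (\<lambda>\<omega>. (Y \<omega> - m) / s) std_normal_density"
        using normal_standard_normal_convert[OF sp] by simp
      have Z': "distributed M lborel (\<lambda>\<omega>. (m - Y \<omega>) / s) std_normal_density"
        using normal_density_affine[OF Z, of "-1" 0] by simp
      have "measure M {\<omega>\<in>space M. L * (\<beta> * sqrt c) < \<bar>Y \<omega> - m\<bar>}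
          \<le> measure M ({\<omega>\<in>space M. L < (Y \<omega> - m) / s} \<union> {\<omega>\<in>space M. L < (m - Y \<omega>) / s})"
      proof (rule finite_measure_mono)
        show "{\<omega>\<in>space M. L * (\<beta> * sqrt c) < \<bar>Y \<omega> - m\<bar>}
          \<subseteq> {\<omega>\<in>space M. L < (Y \<omega> - m) / s} \<union> {\<omega>\<in>space M. L < (m - Y \<omega>) / s}"
          using sp by (auto simp: s_def[symmetric] field_simps abs_if split: if_splits)
      qed measurable
      also have "\<dots> \<le> measure M {\<omega>\<in>space M. L < (Y \<omega> - m) / s} + measure M {\<omega>\<in>space M. L < (m - Y \<omega>) / s}"
        by (rule measure_Un_le) measurable
      also have "\<dots> \<le> exp (- L\<^sup>2 / 2) / 2 + exp (- L\<^sup>2 / 2) / 2"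
        by (intro add_mono std_normal_upper[OF P Z L] std_normal_upper[OF P Z' L])
      finally show ?thesis by simp
    next
      case False
      then have "v = 0" using v \<beta> c by (metis mult_nonneg_nonneg order_less_le zero_le_power2)
      then have "s = 0" using sv by simp
      have "AE \<omega> in M. Y \<omega> = m" using G False by simp
      then have "AE \<omega> in M. \<not> (L * (\<beta> * sqrt c) < \<bar>Y \<omega> - m\<bar>)"
        by eventually_elim (use \<open>s = 0\<close> in \<open>auto simp add: s_def\<close>)
      then have "measure M {\<omega>\<in>space M. L * (\<beta> * sqrt c) < \<bar>Y \<omega> - m\<bar>} = 0"
        by (subst prob_Collect_eq_0) measurable
      then show ?thesis by simp
    qed
  }
qed
theorem mainTheorem14:
  fixes Xs :: "'a::euclidean_space set"
    and l l' :: real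
    and f noisevar :: "'a \<Rightarrow> real"
    and B B' R R' w \<delta> :: real
    and T Bud t :: nat
    and hist :: "('a \<times> real \<times> real) list"
    and M :: "'b measure"
    and F G :: "nat \<Rightarrow> 'b \<Rightarrow> 'a \<Rightarrow> real"
    and Xsel :: "nat \<Rightarrow> 'b \<Rightarrow> 'a"
    and xstar :: 'a
  assumes Xs_fin: "finite Xs" and Xs_ne: "Xs \<noteq> {}"
    and l_pos: "l > 0" and l'_pos: "l' > 0"
    and f_rkhs: "in_rkhs (se_kernel l) Xs f" and f_norm: "rkhs_norm (se_kernel l) Xs f \<le> B"
    and noise_pos: "\<forall>x\<in>Xs. noisevar x > 0"
    and g_rkhs: "in_rkhs (se_kernel l') Xs (\<lambda>x. - noisevar x)"
    and g_norm: "rkhs_norm (se_kernel l') Xs (\<lambda>x. - noisevar x) \<le> B'"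
    and T_pos: "T \<ge> 1" and Bud_pos: "Bud \<ge> 1"
    and R_pos: "R > 0" and R'_pos: "R' > 0"
    and w_range: "0 \<le> w" "w \<le> 1"
    and \<delta>_range: "0 < \<delta>" "\<delta> < 1"
    and t_pos: "t \<ge> 1"
    and hist_in: "set (map fst hist) \<subseteq> Xs"
    \<comment> \<open>event E^f(t)\<close>
    and Ef: "\<forall>x\<in>Xs.
      \<bar>post_mean (se_kernel l) (1 + 2 / real T) (map (\<lambda>(x, y, z). (x, y)) hist) x - f x\<bar>
      \<le> (B + R * sqrt (2 * (max_info_gain (se_kernel l) (1 + 2 / real T) Xs (length hist)
                              + 1 + ln (3 / \<delta>))))
        * post_sd (se_kernel l) (1 + 2 / real T) (map fst hist) x"
    \<comment> \<open>event E^g(t), with g = - noise variance\<close>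
    and Eg: "\<forall>x\<in>Xs.
      \<bar>post_mean (se_kernel l') (1 + 2 / real T) (map (\<lambda>(x, y, z). (x, z)) hist) x - (- noisevar x)\<bar>
      \<le> (B' + R' * sqrt (2 * (max_info_gain (se_kernel l') (1 + 2 / real T) Xs (length hist)
                              + 1 + ln (3 / \<delta>))))
        * post_sd (se_kernel l') (1 + 2 / real T) (map fst hist) x"
    and M_prob: "prob_space M"
    \<comment> \<open>f_t^(b) ~ GP(mu_{t-1}, beta_t^2 sigma_{t-1}^2)\<close>
    and F_gp: "\<forall>b. gaussian_field M Xs
      (post_mean (se_kernel l) (1 + 2 / real T) (map (\<lambda>(x, y, z). (x, y)) hist))
      (\<lambda>x x'. (B + R * sqrt (2 * (max_info_gain (se_kernel l) (1 + 2 / real T) Xs (length hist)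
                              + 1 + ln (3 / \<delta>))))\<^sup>2
              * post_cov (se_kernel l) (1 + 2 / real T) (map fst hist) x x')
      (F b)"
    \<comment> \<open>g_t^(b) ~ GP(mu'_{t-1}, beta'_t^2 sigma'_{t-1}^2)\<close>
    and G_gp: "\<forall>b. gaussian_field M Xs
      (post_mean (se_kernel l') (1 + 2 / real T) (map (\<lambda>(x, y, z). (x, z)) hist))
      (\<lambda>x x'. (B' + R' * sqrt (2 * (max_info_gain (se_kernel l') (1 + 2 / real T) Xs (length hist)
                              + 1 + ln (3 / \<delta>))))\<^sup>2
              * post_cov (se_kernel l') (1 + 2 / real T) (map fst hist) x x')
      (G b)"
    \<comment> \<open>all samples are drawn independently\<close>
    and indep: "prob_space.indep_vars M (\<lambda>_. Pi\<^sub>M Xs (\<lambda>_. borel))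
      (\<lambda>(b, j) \<omega>. restrict (if j then F b \<omega> else G b \<omega>) Xs) (UNIV :: (nat \<times> bool) set)"
    \<comment> \<open>x_t^(b) is a (measurably selected) maximiser of w f^(b) + (1-w) g^(b) over Xs\<close>
    and Xsel_meas: "\<forall>b. Xsel b \<in> measurable M (count_space UNIV)"
    and Xsel_max: "\<forall>b. \<forall>\<omega>\<in>space M. Xsel b \<omega> \<in> Xs \<and>
      (\<forall>x\<in>Xs. w * F b \<omega> x + (1 - w) * G b \<omega> x
               \<le> w * F b \<omega> (Xsel b \<omega>) + (1 - w) * G b \<omega> (Xsel b \<omega>))"
    \<comment> \<open>x*_omega maximises h = w f + (1-w) g\<close>
    and xstar: "xstar \<in> Xs"
      "\<forall>x\<in>Xs. w * f x + (1 - w) * (- noisevar x) \<le> w * f xstar + (1 - w) * (- noisevar xstar)"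
  shows "\<forall>b\<ge>1. measure M {\<omega> \<in> space M. Xsel b \<omega> \<in> Xs -
      {x \<in> Xs. (w * f xstar + (1 - w) * (- noisevar xstar)) - (w * f x + (1 - w) * (- noisevar x))
         > w * ((B + R * sqrt (2 * (max_info_gain (se_kernel l) (1 + 2 / real T) Xs (length hist)
                              + 1 + ln (3 / \<delta>))))
                * (1 + sqrt (2 * ln (2 * real Bud * real (card Xs) * (real t)\<^sup>2))))
             * post_sd (se_kernel l) (1 + 2 / real T) (map fst hist) x
           + (1 - w) * ((B' + R' * sqrt (2 * (max_info_gain (se_kernel l') (1 + 2 / real T) Xs (length hist)
                              + 1 + ln (3 / \<delta>))))
                * (1 + sqrt (2 * ln (2 * real Bud * real (card Xs) * (real t)\<^sup>2))))
             * post_sd (se_kernel l') (1 + 2 / real T) (map fst hist) x}}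
    \<ge> (1 / (4 * exp 1 * sqrt pi))\<^sup>2 - 1 / (real t)\<^sup>2"
proof (intro allI impI)
  fix b :: nat assume "1 \<le> b"
  interpret P: prob_space M by (rule M_prob)
  define lam where "lam = 1 + 2 / real T"
  define \<beta> where "\<beta> = B + R * sqrt (2 * (max_info_gain (se_kernel l) lam Xs (length hist) + 1 + ln (3 / \<delta>)))"
  define \<beta>' where "\<beta>' = B' + R' * sqrt (2 * (max_info_gain (se_kernel l') lam Xs (length hist) + 1 + ln (3 / \<delta>)))"
  define Lt where "Lt = sqrt (2 * ln (2 * real Bud * real (card Xs) * (real t)\<^sup>2))"
  define \<mu> where "\<mu> = post_mean (se_kernel l) lam (map (\<lambda>(x, y, z). (x, y)) hist)"
  define \<mu>' where "\<mu>' = post_mean (se_kernel l') lam (map (\<lambda>(x, y, z). (x, z)) hist)"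
  define \<sigma> where "\<sigma> = post_sd (se_kernel l) lam (map fst hist)"
  define \<sigma>' where "\<sigma>' = post_sd (se_kernel l') lam (map fst hist)"
  define cv where "cv x = post_cov (se_kernel l) lam (map fst hist) x x" for x
  define cv' where "cv' x = post_cov (se_kernel l') lam (map fst hist) x x" for x
  define g where "g x = - noisevar x" for x
  define h where "h x = w * f x + (1 - w) * g x" for x
  define p where "p = 1 / (4 * exp 1 * sqrt pi)"
  define N where "N = 2 * real Bud * real (card Xs) * (real t)\<^sup>2"

  have Ef': "\<forall>x\<in>Xs. \<bar>\<mu> x - f x\<bar> \<le> \<beta> * \<sigma> x"
    using Ef unfolding \<mu>_def \<beta>_def \<sigma>_def lam_def .
  have Eg': "\<forall>x\<in>Xs. \<bar>\<mu>' x - g x\<bar> \<le> \<beta>' * \<sigma>' x"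
    using Eg unfolding \<mu>'_def \<beta>'_def \<sigma>'_def lam_def g_def .
  have Fb: "gaussian_field M Xs \<mu> (\<lambda>x x'. \<beta>\<^sup>2 * post_cov (se_kernel l) lam (map fst hist) x x') (F b)"
    using F_gp unfolding \<mu>_def \<beta>_def lam_def by blast
  have Gb: "gaussian_field M Xs \<mu>' (\<lambda>x x'. \<beta>'\<^sup>2 * post_cov (se_kernel l') lam (map fst hist) x x') (G b)"
    using G_gp unfolding \<mu>'_def \<beta>'_def lam_def by blast

  have l3: "0 < ln (3 / \<delta>)" using \<delta>_range by simp
  have B0: "0 \<le> B" using rkhs_norm_nonneg[OF Xs_fin l_pos f_rkhs] f_norm by linarith
  have B'0: "0 \<le> B'" using rkhs_norm_nonneg[OF Xs_fin l'_pos g_rkhs] g_norm by linarith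
  have \<beta>pos: "\<beta> > 0"
  proof -
    have "0 < 2 * (max_info_gain (se_kernel l) lam Xs (length hist) + 1 + ln (3 / \<delta>))"
      using max_info_gain_nonneg[OF Xs_fin] l3 by (smt (verit))
    then have "0 < R * sqrt (2 * (max_info_gain (se_kernel l) lam Xs (length hist) + 1 + ln (3 / \<delta>)))"
      using R_pos by simp
    then show ?thesis using B0 by (simp add: \<beta>_def)
  qed
  have \<beta>'pos: "\<beta>' > 0"
  proof -
    have "0 < 2 * (max_info_gain (se_kernel l') lam Xs (length hist) + 1 + ln (3 / \<delta>))"
      using max_info_gain_nonneg[OF Xs_fin] l3 by (smt (verit))
    then have "0 < R' * sqrt (2 * (max_info_gain (se_kernel l') lam Xs (length hist) + 1 + ln (3 / \<delta>)))"
      using R'_pos by simp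
    then show ?thesis using B'0 by (simp add: \<beta>'_def)
  qed
  have \<sigma>0: "0 \<le> \<sigma> x" if "x \<in> Xs" for x
  proof (rule ccontr)
    assume "\<not> 0 \<le> \<sigma> x"
    then have "\<beta> * \<sigma> x < 0" using \<beta>pos by (simp add: mult_pos_neg)
    then show False using Ef' that by (metis abs_ge_zero not_le order_trans)
  qed
  have \<sigma>'0: "0 \<le> \<sigma>' x" if "x \<in> Xs" for x
  proof (rule ccontr)
    assume "\<not> 0 \<le> \<sigma>' x"
    then have "\<beta>' * \<sigma>' x < 0" using \<beta>'pos by (simp add: mult_pos_neg)
    then show False using Eg' that by (metis abs_ge_zero not_le order_trans)
  qed
  have cv0: "0 \<le> cv x" if "x \<in> Xs" for x
    using \<sigma>0[OF that] by (simp add: \<sigma>_def cv_def post_sd_def)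
  have cv'0: "0 \<le> cv' x" if "x \<in> Xs" for x
    using \<sigma>'0[OF that] by (simp add: \<sigma>'_def cv'_def post_sd_def)
  have \<sigma>cv: "\<sigma> x = sqrt (cv x)" for x by (simp add: \<sigma>_def cv_def post_sd_def)
  have \<sigma>'cv: "\<sigma>' x = sqrt (cv' x)" for x by (simp add: \<sigma>'_def cv'_def post_sd_def)

  have cardpos: "0 < real (card Xs)" using Xs_fin Xs_ne by (simp add: card_gt_0_iff)
  have N2: "2 \<le> N"
  proof -
    have "1 \<le> real Bud" "1 \<le> real (card Xs)" "1 \<le> (real t)\<^sup>2"
      using Bud_pos cardpos t_pos by auto
    then have "1 * 1 * 1 \<le> real Bud * real (card Xs) * (real t)\<^sup>2"
      by (intro mult_mono) auto
    then show ?thesis by (simp add: N_def)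
  qed
  have ln2: "1/3 \<le> ln (2::real)"
  proof -
    have "exp (1/3::real) \<le> 2" using exp_bound_half[of "1/3::real"] by simp
    then have "ln (exp (1/3::real)) \<le> ln 2" by (subst ln_le_cancel_iff) auto
    then show ?thesis by simp
  qed
  have lnN: "ln 2 \<le> ln N" using N2 by simp
  have Lt2: "Lt\<^sup>2 = 2 * ln N" using lnN ln2 by (simp add: Lt_def N_def)
  have Ltpos: "0 < Lt" using lnN ln2 by (simp add: Lt_def N_def)
  have Ltpi: "2 \<le> Lt * sqrt (2 * pi)"
  proof (rule power2_le_imp_le)
    have "(Lt * sqrt (2 * pi))\<^sup>2 = Lt\<^sup>2 * (2 * pi)" by (simp add: power_mult_distrib)
    also have "\<dots> = 4 * (pi * ln N)" using Lt2 by simp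
    finally have e1: "(Lt * sqrt (2 * pi))\<^sup>2 = 4 * (pi * ln N)" .
    have "3 * (1/3) \<le> pi * ln N"
      using pi_gt3 lnN ln2 by (intro mult_mono) auto
    then show "2\<^sup>2 \<le> (Lt * sqrt (2 * pi))\<^sup>2" using e1 by simp
    show "0 \<le> Lt * sqrt (2 * pi)" using Ltpos by simp
  qed
  have expL: "exp (- Lt\<^sup>2 / 2) = 1 / N"
    using Lt2 N2 by (simp add: exp_minus inverse_eq_divide)

  have Fm: "(\<lambda>\<omega>. F b \<omega> x) \<in> borel_measurable M" if "x \<in> Xs" for x
    using gf_coord(1)[OF Fb that Xs_fin] .
  have Gm: "(\<lambda>\<omega>. G b \<omega> x) \<in> borel_measurable M" if "x \<in> Xs" for x
    using gf_coord(1)[OF Gb that Xs_fin] .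
  have Fd: "if \<beta>\<^sup>2 * cv x > 0 then distributed M lborel (\<lambda>\<omega>. F b \<omega> x) (normal_density (\<mu> x) (sqrt (\<beta>\<^sup>2 * cv x)))
     else (AE \<omega> in M. F b \<omega> x = \<mu> x)" if "x \<in> Xs" for x
    using gf_coord(2)[OF Fb that Xs_fin] by (simp add: cv_def)
  have Gd: "if \<beta>'\<^sup>2 * cv' x > 0 then distributed M lborel (\<lambda>\<omega>. G b \<omega> x) (normal_density (\<mu>' x) (sqrt (\<beta>'\<^sup>2 * cv' x)))
     else (AE \<omega> in M. G b \<omega> x = \<mu>' x)" if "x \<in> Xs" for x
    using gf_coord(2)[OF Gb that Xs_fin] by (simp add: cv'_def)
  have lowF: "p \<le> P.prob {\<omega>\<in>space M. a \<le> F b \<omega> x}" if "x \<in> Xs" "a \<le> \<mu> x + \<beta> * \<sigma> x" for x a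
    using coord_bounds(1)[OF M_prob Fm[OF that(1)] Fd[OF that(1)] refl _ cv0[OF that(1)]] \<beta>pos that(2)
    by (simp add: p_def \<sigma>cv)
  have lowG: "p \<le> P.prob {\<omega>\<in>space M. a \<le> G b \<omega> x}" if "x \<in> Xs" "a \<le> \<mu>' x + \<beta>' * \<sigma>' x" for x a
    using coord_bounds(1)[OF M_prob Gm[OF that(1)] Gd[OF that(1)] refl _ cv'0[OF that(1)]] \<beta>'pos that(2)
    by (simp add: p_def \<sigma>'cv)
  have upF: "P.prob {\<omega>\<in>space M. Lt * (\<beta> * \<sigma> x) < \<bar>F b \<omega> x - \<mu> x\<bar>} \<le> 1 / N" if "x \<in> Xs" for x
    using coord_bounds(2)[OF M_prob Fm[OF that(1)] Fd[OF that(1)] refl _ cv0[OF that(1)] Ltpos Ltpi] \<beta>pos expL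
    by (simp add: \<sigma>cv)
  have upG: "P.prob {\<omega>\<in>space M. Lt * (\<beta>' * \<sigma>' x) < \<bar>G b \<omega> x - \<mu>' x\<bar>} \<le> 1 / N" if "x \<in> Xs" for x
    using coord_bounds(2)[OF M_prob Gm[OF that(1)] Gd[OF that(1)] refl _ cv'0[OF that(1)] Ltpos Ltpi] \<beta>'pos expL
    by (simp add: \<sigma>'cv)

  define E1 where "E1 = {\<omega>\<in>space M. f xstar \<le> F b \<omega> xstar}"
  define E2 where "E2 = {\<omega>\<in>space M. g xstar \<le> G b \<omega> xstar}"
  define BF where "BF x = {\<omega>\<in>space M. Lt * (\<beta> * \<sigma> x) < \<bar>F b \<omega> x - \<mu> x\<bar>}" for x
  define BG where "BG x = {\<omega>\<in>space M. Lt * (\<beta>' * \<sigma>' x) < \<bar>G b \<omega> x - \<mu>' x\<bar>}" for x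
  define Bad where "Bad = (\<Union>x\<in>Xs. BF x) \<union> (\<Union>x\<in>Xs. BG x)"
  define A where "A = {\<omega> \<in> space M. Xsel b \<omega> \<in> Xs -
      {x \<in> Xs. h xstar - h x > w * (\<beta> * (1 + Lt)) * \<sigma> x + (1 - w) * (\<beta>' * (1 + Lt)) * \<sigma>' x}}"

  have E1m: "E1 \<in> sets M"
  proof -
    have [measurable]: "(\<lambda>\<omega>. F b \<omega> xstar) \<in> borel_measurable M" by (rule Fm[OF xstar(1)])
    show ?thesis unfolding E1_def by measurable
  qed
  have E2m: "E2 \<in> sets M"
  proof -
    have [measurable]: "(\<lambda>\<omega>. G b \<omega> xstar) \<in> borel_measurable M" by (rule Gm[OF xstar(1)])
    show ?thesis unfolding E2_def by measurable
  qed
  have BFm: "BF x \<in> sets M" if "x \<in> Xs" for x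
  proof -
    have [measurable]: "(\<lambda>\<omega>. F b \<omega> x) \<in> borel_measurable M" by (rule Fm[OF that])
    show ?thesis unfolding BF_def by measurable
  qed
  have BGm: "BG x \<in> sets M" if "x \<in> Xs" for x
  proof -
    have [measurable]: "(\<lambda>\<omega>. G b \<omega> x) \<in> borel_measurable M" by (rule Gm[OF that])
    show ?thesis unfolding BG_def by measurable
  qed
  have Badm: "Bad \<in> sets M" unfolding Bad_def using BFm BGm Xs_fin by (intro sets.Un sets.finite_UN) auto
  have Am: "A \<in> sets M"
  proof -
    let ?S = "Xs - {x \<in> Xs. h xstar - h x > w * (\<beta> * (1 + Lt)) * \<sigma> x + (1 - w) * (\<beta>' * (1 + Lt)) * \<sigma>' x}"
    have "Xsel b -` ?S \<inter> space M \<in> sets M"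
      using Xsel_meas by (intro measurable_sets[where A="count_space UNIV"]) auto
    moreover have "A = Xsel b -` ?S \<inter> space M" unfolding A_def by auto
    ultimately show ?thesis by simp
  qed

  have pE1: "p \<le> P.prob E1"
    unfolding E1_def using xstar(1) Ef' by (intro lowF) (auto simp: abs_le_iff)
  have pE2: "p \<le> P.prob E2"
    unfolding E2_def using xstar(1) Eg' by (intro lowG) (auto simp: abs_le_iff)

  have indE: "P.prob (E1 \<inter> E2) = P.prob E1 * P.prob E2"
  proof -
    define Xv where "Xv = (\<lambda>(b, j) \<omega>. restrict (if j then F b \<omega> else G b \<omega>) Xs)"
    define PM where "PM = (Pi\<^sub>M Xs (\<lambda>_. borel) :: ('a \<Rightarrow> real) measure)"
    have iv: "P.indep_vars (\<lambda>_. PM) Xv UNIV" using indep unfolding Xv_def PM_def .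
    then have rv: "\<And>i. Xv i \<in> measurable M PM" and
      isets: "P.indep_sets (\<lambda>i. sigma_sets (space M) {Xv i -` S \<inter> space M | S. S \<in> sets PM}) UNIV"
      unfolding P.indep_vars_def by auto
    have comp[measurable]: "(\<lambda>\<phi>. \<phi> xstar) \<in> borel_measurable PM"
      unfolding PM_def by (rule measurable_component_singleton) (rule xstar(1))
    define S1 where "S1 = {\<phi>\<in>space PM. f xstar \<le> \<phi> xstar}"
    define S2 where "S2 = {\<phi>\<in>space PM. g xstar \<le> \<phi> xstar}"
    have S1m: "S1 \<in> sets PM" unfolding S1_def by measurable
    have S2m: "S2 \<in> sets PM" unfolding S2_def by measurable
    have E1eq: "E1 = Xv (b, True) -` S1 \<inter> space M"
      using measurable_space[OF rv[of "(b, True)"]] xstar(1)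
      by (auto simp: E1_def S1_def Xv_def)
    have E2eq: "E2 = Xv (b, False) -` S2 \<inter> space M"
      using measurable_space[OF rv[of "(b, False)"]] xstar(1)
      by (auto simp: E2_def S2_def Xv_def)
    define A' where "A' i = (if snd i then E1 else E2)" for i :: "nat \<times> bool"
    have "P.prob (\<Inter>j\<in>{(b, True), (b, False)}. A' j) = (\<Prod>j\<in>{(b, True), (b, False)}. P.prob (A' j))"
    proof (rule P.indep_setsD[OF isets])
      show "\<forall>j\<in>{(b, True), (b, False)}. A' j \<in> sigma_sets (space M) {Xv j -` S \<inter> space M | S. S \<in> sets PM}"
        using E1eq E2eq S1m S2m by (auto simp: A'_def intro!: sigma_sets.Basic)
    qed auto
    then show ?thesis by (simp add: A'_def Int_commute)
  qed

  have pBad: "P.prob Bad \<le> 1 / (real t)\<^sup>2"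
  proof -
    have "P.prob Bad \<le> P.prob (\<Union>x\<in>Xs. BF x) + P.prob (\<Union>x\<in>Xs. BG x)"
      unfolding Bad_def using BFm BGm Xs_fin by (intro measure_Un_le sets.finite_UN) auto
    also have "\<dots> \<le> (\<Sum>x\<in>Xs. P.prob (BF x)) + (\<Sum>x\<in>Xs. P.prob (BG x))"
      using BFm BGm Xs_fin by (intro add_mono measure_UNION_le) auto
    also have "\<dots> \<le> (\<Sum>x\<in>Xs. 1 / N) + (\<Sum>x\<in>Xs. 1 / N)"
      using upF upG by (intro add_mono sum_mono) (auto simp: BF_def BG_def)
    also have "\<dots> = 2 * real (card Xs) / N" by simp
    also have "\<dots> = 1 / (real Bud * (real t)\<^sup>2)" using cardpos by (simp add: N_def)
    also have "\<dots> \<le> 1 / (real t)\<^sup>2"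
    proof -
      have "1 * (real t)\<^sup>2 \<le> real Bud * (real t)\<^sup>2" using Bud_pos by (intro mult_right_mono) auto
      then show ?thesis using t_pos by (intro divide_left_mono) auto
    qed
    finally show ?thesis .
  qed

  have incl: "(E1 \<inter> E2) - Bad \<subseteq> A"
  proof
    fix \<omega> assume \<omega>: "\<omega> \<in> (E1 \<inter> E2) - Bad"
    then have \<omega>M: "\<omega> \<in> space M" by (simp add: E1_def)
    define x where "x = Xsel b \<omega>"
    have xX: "x \<in> Xs" and xmax: "\<forall>y\<in>Xs. w * F b \<omega> y + (1 - w) * G b \<omega> y \<le> w * F b \<omega> x + (1 - w) * G b \<omega> x"
      using Xsel_max \<omega>M by (auto simp: x_def)
    have nF: "\<bar>F b \<omega> x - \<mu> x\<bar> \<le> Lt * (\<beta> * \<sigma> x)"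
      using \<omega> xX \<omega>M by (auto simp: Bad_def BF_def not_less)
    have nG: "\<bar>G b \<omega> x - \<mu>' x\<bar> \<le> Lt * (\<beta>' * \<sigma>' x)"
      using \<omega> xX \<omega>M by (auto simp: Bad_def BG_def not_less)
    have F1: "F b \<omega> x \<le> f x + \<beta> * (1 + Lt) * \<sigma> x"
      using nF Ef' xX by (auto simp: abs_le_iff algebra_simps)
    have G1: "G b \<omega> x \<le> g x + \<beta>' * (1 + Lt) * \<sigma>' x"
      using nG Eg' xX by (auto simp: abs_le_iff algebra_simps)
    have w0: "0 \<le> w" "0 \<le> 1 - w" using w_range by auto
    have "w * F b \<omega> x \<le> w * (f x + \<beta> * (1 + Lt) * \<sigma> x)" using F1 w0 by (intro mult_left_mono)
    moreover have "(1 - w) * G b \<omega> x \<le> (1 - w) * (g x + \<beta>' * (1 + Lt) * \<sigma>' x)" using G1 w0 by (intro mult_left_mono)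
    moreover have "w * f xstar \<le> w * F b \<omega> xstar" using \<omega> w0 by (intro mult_left_mono) (auto simp: E1_def)
    moreover have "(1 - w) * g xstar \<le> (1 - w) * G b \<omega> xstar" using \<omega> w0 by (intro mult_left_mono) (auto simp: E2_def)
    moreover have "w * F b \<omega> xstar + (1 - w) * G b \<omega> xstar \<le> w * F b \<omega> x + (1 - w) * G b \<omega> x"
      using xmax xstar(1) by blast
    ultimately have "h xstar - h x \<le> w * (\<beta> * (1 + Lt)) * \<sigma> x + (1 - w) * (\<beta>' * (1 + Lt)) * \<sigma>' x"
      unfolding h_def by (simp add: algebra_simps)
    then show "\<omega> \<in> A" using xX \<omega>M by (simp add: A_def x_def)
  qed

  have main: "p\<^sup>2 - 1 / (real t)\<^sup>2 \<le> P.prob A"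
  proof -
    have p0: "0 \<le> p" by (simp add: p_def)
    have "p\<^sup>2 \<le> P.prob E1 * P.prob E2"
      unfolding power2_eq_square using pE1 pE2 p0 by (intro mult_mono) auto
    also have "\<dots> = P.prob (E1 \<inter> E2)" by (rule indE[symmetric])
    also have "\<dots> \<le> P.prob ((E1 \<inter> E2) - Bad) + P.prob Bad"
    proof -
      have "P.prob (E1 \<inter> E2) \<le> P.prob (((E1 \<inter> E2) - Bad) \<union> Bad)"
        using E1m E2m Badm by (intro P.finite_measure_mono) auto
      also have "\<dots> \<le> P.prob ((E1 \<inter> E2) - Bad) + P.prob Bad"
        using E1m E2m Badm by (intro measure_Un_le) auto
      finally show ?thesis .
    qed
    also have "P.prob ((E1 \<inter> E2) - Bad) \<le> P.prob A"
      using incl Am by (intro P.finite_measure_mono)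
    finally show ?thesis using pBad by linarith
  qed
  show "measure M {\<omega> \<in> space M. Xsel b \<omega> \<in> Xs -
      {x \<in> Xs. (w * f xstar + (1 - w) * (- noisevar xstar)) - (w * f x + (1 - w) * (- noisevar x))
         > w * ((B + R * sqrt (2 * (max_info_gain (se_kernel l) (1 + 2 / real T) Xs (length hist)
                              + 1 + ln (3 / \<delta>))))
                * (1 + sqrt (2 * ln (2 * real Bud * real (card Xs) * (real t)\<^sup>2))))
             * post_sd (se_kernel l) (1 + 2 / real T) (map fst hist) x
           + (1 - w) * ((B' + R' * sqrt (2 * (max_info_gain (se_kernel l') (1 + 2 / real T) Xs (length hist)
                              + 1 + ln (3 / \<delta>))))
                * (1 + sqrt (2 * ln (2 * real Bud * real (card Xs) * (real t)\<^sup>2))))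
             * post_sd (se_kernel l') (1 + 2 / real T) (map fst hist) x}}
    \<ge> (1 / (4 * exp 1 * sqrt pi))\<^sup>2 - 1 / (real t)\<^sup>2"
    using main unfolding A_def h_def g_def \<beta>_def \<beta>'_def Lt_def \<sigma>_def \<sigma>'_def lam_def p_def .
qed

end
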